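(* Let $p>1$, let $u\in W^{3,q}(0,1)$ for some $q>1$, let $\kappa_u=u''/(1+(u')^2)^{3/2}$, let $\mathbf{s}(x)=\int_0^x\sqrt{1+u'(\xi)^2}\,d\xi$ with inverse $x(\mathbf{s})$, and set $\tilde\kappa_u(\mathbf{s}):=\kappa_u(x(\mathbf{s}))$. Let $0\le x_1<x_2\le 1$. If $$\int_{x_1}^{x_2}\Bigl[p\frac{|\kappa_u|^{p-2}\kappa_u}{1+(u')^2}\phi''+(1-3p)\frac{|\kappa_u|^pu'}{\sqrt{1+(u')^2}}\phi'\Bigr]dx=0\quad\text{for all }\phi\in C_0^\infty(x_1,x_2),$$ then $$\int_{\mathbf{s}(x_1)}^{\mathbf{s}(x_2)}\bigl[p|\tilde\kappa_u|^{p-2}\tilde\kappa_u\varphi''+(p-1)|\tilde\kappa_u|^p\tilde\kappa_u\varphi\bigr]d\mathbf{s}=0\quad\text{for all }\varphi\in C_0^\infty(\mathbf{s}(x_1),\mathbf{s}(x_2)).$$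
   Context: $\kappa_u$ is the curvature of the graph of $u$, and $\tilde\kappa_u$ is that curvature as a function of the arc length parameter $\mathbf{s}$ of the graph. *)

theory Defs
  imports "HOL-Analysis.Analysis"
begin

text \<open>u in W^{3,q}(0,1), given via its continuous representative: u1, u2 are the
  classical (one-sided at the endpoints) first and second derivatives of u on [0,1],
  and u2 is absolutely continuous with a derivative g in L^q(0,1).\<close>
definition sobolev_W3 :: "real \<Rightarrow> (real \<Rightarrow> real) \<Rightarrow> (real \<Rightarrow> real) \<Rightarrow> (real \<Rightarrow> real) \<Rightarrow> bool" where
  "sobolev_W3 q u u1 u2 \<longleftrightarrow>
     (\<forall>x\<in>{0..1}. (u has_real_derivative u1 x) (at x within {0..1}) \<and>
                 (u1 has_real_derivative u2 x) (at x within {0..1})) \<and>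
     (\<exists>g. set_integrable lborel {0..1} g \<and>
          set_integrable lborel {0..1} (\<lambda>x. \<bar>g x\<bar> powr q) \<and>
          (\<forall>x\<in>{0..1}. u2 x = u2 0 + (LBINT t=0..x. g t)))"

definition test_fun :: "real \<Rightarrow> real \<Rightarrow> (real \<Rightarrow> real) \<Rightarrow> bool" where
  "test_fun a b \<phi> \<longleftrightarrow>
     (\<forall>n x. ((deriv ^^ n) \<phi>) differentiable (at x)) \<and>
     (\<exists>c d. a < c \<and> c \<le> d \<and> d < b \<and> (\<forall>x. x \<notin> {c..d} \<longrightarrow> \<phi> x = 0))"

definition curv :: "(real \<Rightarrow> real) \<Rightarrow> (real \<Rightarrow> real) \<Rightarrow> real \<Rightarrow> real" where
  "curv u1 u2 x = u2 x / (1 + (u1 x)\<^sup>2) powr (3/2)"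

definition arclen :: "(real \<Rightarrow> real) \<Rightarrow> real \<Rightarrow> real" where
  "arclen u1 x = integral {0..x} (\<lambda>\<xi>. sqrt (1 + (u1 \<xi>)\<^sup>2))"

definition curv_s :: "(real \<Rightarrow> real) \<Rightarrow> (real \<Rightarrow> real) \<Rightarrow> real \<Rightarrow> real" where
  "curv_s u1 u2 s = curv u1 u2 (the_inv_into {0..1} (arclen u1) s)"

end

theory Submission
  imports Defs "HOL-Computational_Algebra.Polynomial"
begin

definition smooth :: "(real \<Rightarrow> real) \<Rightarrow> bool" where
  "smooth f \<longleftrightarrow> (\<forall>n x. ((deriv ^^ n) f) differentiable (at x))"

lemma smooth_diff: "smooth f \<Longrightarrow> f differentiable (at x)"
  unfolding smooth_def by (metis funpow_0)

lemma smooth_DERIV: "smooth f \<Longrightarrow> (f has_real_derivative deriv f x) (at x)"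
  using smooth_diff DERIV_deriv_iff_real_differentiable by blast

lemma smooth_fdiff: "smooth f \<Longrightarrow> f field_differentiable (at x)"
  using smooth_DERIV field_differentiable_def by blast

lemma smooth_deriv: "smooth f \<Longrightarrow> smooth (deriv f)"
  unfolding smooth_def by (metis comp_apply funpow_Suc_right)

lemma smooth_cont: "smooth f \<Longrightarrow> continuous_on S f"
  by (meson continuous_at_imp_continuous_on differentiable_imp_continuous_within smooth_diff)

lemma smooth_from_deriv:
  assumes "\<And>x. (F has_real_derivative f x) (at x)" "smooth f"
  shows "smooth F"
proof -
  have "deriv F = f" using assms(1) DERIV_imp_deriv by blast
  show ?thesis unfolding smooth_def
  proof (intro allI)
    fix n x show "(deriv ^^ n) F differentiable at x"
    proof (cases n)
      case 0 then show ?thesis using assms(1) real_differentiable_def by auto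
    next
      case (Suc m)
      then have "(deriv ^^ n) F = (deriv ^^ m) f" using \<open>deriv F = f\<close>
        by (metis comp_apply funpow_Suc_right)
      then show ?thesis using assms(2) smooth_def by auto
    qed
  qed
qed

lemma deriv_n_add:
  fixes f g :: "real \<Rightarrow> real"
  shows "(\<And>k x. k < n \<Longrightarrow> (deriv ^^ k) f differentiable (at x)) \<Longrightarrow>
   (\<And>k x. k < n \<Longrightarrow> (deriv ^^ k) g differentiable (at x)) \<Longrightarrow>
   (deriv ^^ n) (\<lambda>x. f x + g x) = (\<lambda>x. (deriv ^^ n) f x + (deriv ^^ n) g x)"
proof (induction n)
  case 0 then show ?case by simp
next
  case (Suc n)
  have IH: "(deriv ^^ n) (\<lambda>x. f x + g x) = (\<lambda>x. (deriv ^^ n) f x + (deriv ^^ n) g x)"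
    using Suc by auto
  have df: "(deriv ^^ n) f field_differentiable (at x)" for x
    using Suc.prems(1)[of n x] unfolding field_differentiable_def by (metis lessI real_differentiable_def)
  have dg: "(deriv ^^ n) g field_differentiable (at x)" for x
    using Suc.prems(2)[of n x] unfolding field_differentiable_def by (metis lessI real_differentiable_def)
  show ?case
    by (simp add: IH) (rule ext, rule deriv_add[OF df dg])
qed

lemma smooth_add: "smooth f \<Longrightarrow> smooth g \<Longrightarrow> smooth (\<lambda>x. f x + g x)"
  unfolding smooth_def
  by (subst deriv_n_add) (auto intro!: differentiable_add)

lemma deriv_n_const: "\<exists>c'. (deriv ^^ n) (\<lambda>_. c) = (\<lambda>_. (c'::real))"
proof (induction n)
  case 0 then show ?case by auto
next
  case (Suc n)
  then obtain c' where "(deriv ^^ n) (\<lambda>_. c) = (\<lambda>_. c')" by blast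
  then show ?case by (auto intro!: exI[of _ 0])
qed

lemma smooth_const: "smooth (\<lambda>_. c)"
  unfolding smooth_def using deriv_n_const by (metis differentiable_const)

lemma smooth_mult_aux:
  "\<forall>f g. smooth f \<longrightarrow> smooth g \<longrightarrow> (\<forall>x. (deriv ^^ n) (\<lambda>x. f x * g x) differentiable (at x))"
proof (induction n rule: less_induct)
  case (less n)
  show ?case
  proof (cases n)
    case 0 then show ?thesis
      using smooth_diff differentiable_mult by (metis funpow_0)
  next
    case (Suc m)
    show ?thesis
    proof (intro allI impI)
      fix f g x assume f: "smooth f" and g: "smooth g"
      have "deriv (\<lambda>x. f x * g x) = (\<lambda>x. deriv f x * g x + f x * deriv g x)"
        apply (rule ext)
        apply (subst deriv_mult)
        using f g smooth_fdiff by (auto simp: mult.commute)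
      then have e: "(deriv ^^ n) (\<lambda>x. f x * g x) = (deriv ^^ m) (\<lambda>x. deriv f x * g x + f x * deriv g x)"
        using Suc by (metis comp_apply funpow_Suc_right)
      have h1: "\<And>k x. k \<le> m \<Longrightarrow> (deriv ^^ k) (\<lambda>x. deriv f x * g x) differentiable (at x)"
        using less Suc f g smooth_deriv by auto
      have h2: "\<And>k x. k \<le> m \<Longrightarrow> (deriv ^^ k) (\<lambda>x. f x * deriv g x) differentiable (at x)"
        using less Suc f g smooth_deriv by auto
      show "(deriv ^^ n) (\<lambda>x. f x * g x) differentiable at x"
        unfolding e by (subst deriv_n_add) (auto intro!: differentiable_add h1 h2)
    qed
  qed
qed

lemma smooth_mult: "smooth f \<Longrightarrow> smooth g \<Longrightarrow> smooth (\<lambda>x. f x * g x)"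
  using smooth_mult_aux unfolding smooth_def by blast

lemma smooth_cmult: "smooth f \<Longrightarrow> smooth (\<lambda>x. c * f x)"
  using smooth_mult[OF smooth_const] by blast

lemma smooth_diff_fun: "smooth f \<Longrightarrow> smooth g \<Longrightarrow> smooth (\<lambda>x. f x - g x)"
  using smooth_add[of f "\<lambda>x. (-1) * g x"] smooth_cmult[of g "-1"] by simp

lemma deriv_n_affine:
  assumes "smooth f"
  shows "(deriv ^^ n) (\<lambda>x. f (a * x + b)) = (\<lambda>x. a ^ n * (deriv ^^ n) f (a * x + b))"
proof (induction n)
  case 0 then show ?case by simp
next
  case (Suc n)
  have "\<And>x. ((\<lambda>x. a ^ n * (deriv ^^ n) f (a * x + b)) has_real_derivative
          a ^ Suc n * (deriv ^^ Suc n) f (a * x + b)) (at x)"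
  proof -
    fix x
    have d: "((deriv ^^ n) f has_real_derivative (deriv ^^ Suc n) f (a * x + b)) (at (a * x + b))"
      using assms unfolding smooth_def
      by (simp add: DERIV_deriv_iff_real_differentiable)
    have "((\<lambda>x. (deriv ^^ n) f (a * x + b)) has_real_derivative (deriv ^^ Suc n) f (a * x + b) * a) (at x)"
      by (rule DERIV_chain2[where g="\<lambda>x. a*x+b" and x=x, OF d]) (auto intro!: derivative_eq_intros)
    then have "((\<lambda>x. a ^ n * (deriv ^^ n) f (a * x + b)) has_real_derivative
          a ^ n * ((deriv ^^ Suc n) f (a * x + b) * a)) (at x)"
      by (rule DERIV_cmult)
    then show "((\<lambda>x. a ^ n * (deriv ^^ n) f (a * x + b)) has_real_derivative
          a ^ Suc n * (deriv ^^ Suc n) f (a * x + b)) (at x)"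
      by (simp add: algebra_simps)
  qed
  then have "deriv (\<lambda>x. a ^ n * (deriv ^^ n) f (a * x + b)) = (\<lambda>x. a ^ Suc n * (deriv ^^ Suc n) f (a * x + b))"
    by (intro ext DERIV_imp_deriv)
  then show ?case using Suc by simp
qed

lemma smooth_affine: "smooth f \<Longrightarrow> smooth (\<lambda>x. f (a * x + b))"
  unfolding smooth_def
  apply (subst deriv_n_affine, simp add: smooth_def)
  apply (intro allI differentiable_mult differentiable_const)
  apply (rule differentiable_chain_at[unfolded o_def, of "\<lambda>x. a*x+b"])
  by (auto simp: smooth_def)

definition Gq :: "real poly \<Rightarrow> real \<Rightarrow> real" where
  "Gq q x = (if x > 0 then poly q (1/x) * exp (-(1/x)) else 0)"

definition Dq :: "real poly \<Rightarrow> real poly" where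
  "Dq q = [:0,0,1:] * (q - pderiv q)"

lemma lim_poly_exp: fixes q :: "real poly" shows "((\<lambda>t. poly q t * exp (-t)) \<longlongrightarrow> 0) at_top"
proof -
  have "((\<lambda>t. \<Sum>i\<le>degree q. coeff q i * (t ^ i / exp t)) \<longlongrightarrow> (\<Sum>i\<le>degree q. coeff q i * 0)) at_top"
    by (intro tendsto_sum tendsto_mult tendsto_const tendsto_power_div_exp_0)
  moreover have "(\<lambda>t. \<Sum>i\<le>degree q. coeff q i * (t ^ i / exp t)) = (\<lambda>t. poly q t * exp (-t))"
    by (rule ext) (simp add: poly_altdef exp_minus sum_distrib_right divide_inverse mult.assoc)
  ultimately show ?thesis by simp
qed

lemma lim_right: fixes q :: "real poly" shows "((\<lambda>h. poly q (1/h) * exp (-(1/h))) \<longlongrightarrow> 0) (at_right 0)"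
proof -
  have "((\<lambda>h. poly q (inverse h) * exp (-(inverse h))) \<longlongrightarrow> 0) (at_right 0)"
    using filterlim_compose[OF lim_poly_exp filterlim_inverse_at_top_right] by simp
  then show ?thesis by (simp add: inverse_eq_divide)
qed

lemma Gq_deriv: "(Gq q has_real_derivative Gq (Dq q) x) (at x)"
proof -
  consider "x > 0" | "x < 0" | "x = 0" by linarith
  then show ?thesis
  proof cases
    case 1
    have i: "((\<lambda>x. 1/x) has_real_derivative -1/x^2) (at x)"
      using 1 DERIV_inverse[of x] by (simp add: inverse_eq_divide power2_eq_square)
    have d1: "((\<lambda>x. poly q (1/x)) has_real_derivative poly (pderiv q) (1/x) * (-1/x^2)) (at x)"
      by (rule DERIV_chain2[where f="poly q" and g="\<lambda>x. 1/x", OF poly_DERIV i])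
    have d2: "((\<lambda>x. exp (-(1/x))) has_real_derivative exp (-(1/x)) * (-(-1/x^2))) (at x)"
      by (rule DERIV_chain2[where f="exp" and g="\<lambda>x. -(1/x)", OF DERIV_exp DERIV_minus[OF i]])
    have d: "((\<lambda>x. poly q (1/x) * exp (-(1/x))) has_real_derivative
        poly (pderiv q) (1/x) * (-1/x^2) * exp (-(1/x)) + exp (-(1/x)) * (-(-1/x^2)) * poly q (1/x)) (at x)"
      by (rule DERIV_mult[OF d1 d2])
    have e: "poly (pderiv q) (1/x) * (-1/x^2) * exp (-(1/x)) + exp (-(1/x)) * (-(-1/x^2)) * poly q (1/x)
        = Gq (Dq q) x"
      using 1 by (simp add: Gq_def Dq_def poly_mult algebra_simps power2_eq_square)
    show ?thesis
      apply (rule has_field_derivative_transform_within_open[OF d[unfolded e], where S="{0<..}"])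
      using 1 by (auto simp: Gq_def)
  next
    case 2
    show ?thesis
      apply (rule has_field_derivative_transform_within_open[where S="{..<0}" and f="\<lambda>_. 0"])
      using 2 by (auto simp: Gq_def)
  next
    case 3
    have "((\<lambda>y. (Gq q y - Gq q 0) / (y - 0)) \<longlongrightarrow> 0) (at 0)"
      unfolding filterlim_at_split
    proof
      show "((\<lambda>y. (Gq q y - Gq q 0) / (y - 0)) \<longlongrightarrow> 0) (at_left 0)"
        apply (rule tendsto_eventually)
        unfolding eventually_at_left_field by (auto intro!: exI[of _ "-1"] simp: Gq_def)
    next
      have "((\<lambda>y. poly (pCons 0 q) (1/y) * exp (-(1/y))) \<longlongrightarrow> 0) (at_right 0)"
        by (rule lim_right)
      moreover have "\<forall>\<^sub>F y in at_right 0. poly (pCons 0 q) (1/y) * exp (-(1/y)) = (Gq q y - Gq q 0) / (y - 0)"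
        by (rule eventually_mono[OF eventually_at_right_less]) (auto simp: Gq_def)
      ultimately show "((\<lambda>y. (Gq q y - Gq q 0) / (y - 0)) \<longlongrightarrow> 0) (at_right 0)"
        by (rule Lim_transform_eventually)
    qed
    then show ?thesis using 3 by (simp add: has_field_derivative_iff Gq_def)
  qed
qed

lemma deriv_Gq: "deriv (Gq q) = Gq (Dq q)"
  using Gq_deriv DERIV_imp_deriv by blast

lemma deriv_n_Gq: "(deriv ^^ n) (Gq q) = Gq ((Dq ^^ n) q)"
  by (induction n) (auto simp: deriv_Gq)

lemma smooth_Gq: "smooth (Gq q)"
  unfolding smooth_def deriv_n_Gq real_differentiable_def using Gq_deriv by blast

definition bump :: "real \<Rightarrow> real" where
  "bump x = Gq 1 (1 + x) * Gq 1 (1 - x)"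

lemma smooth_bump: "smooth bump"
proof -
  have "smooth (\<lambda>x. Gq 1 (1 * x + 1))" "smooth (\<lambda>x. Gq 1 ((-1) * x + 1))"
    by (rule smooth_affine[OF smooth_Gq])+
  then show ?thesis unfolding bump_def
    using smooth_mult by (simp add: add.commute)
qed

lemma bump_nonneg: "bump x \<ge> 0"
  by (simp add: bump_def Gq_def)

lemma bump_pos: "\<bar>x\<bar> < 1 \<Longrightarrow> bump x > 0"
  by (simp add: bump_def Gq_def)

lemma bump_zero: "\<bar>x\<bar> \<ge> 1 \<Longrightarrow> bump x = 0"
  by (auto simp: bump_def Gq_def abs_if split: if_splits)

lemma test_fun_alt: "test_fun a b \<phi> \<longleftrightarrow> smooth \<phi> \<and>
     (\<exists>c d. a < c \<and> c \<le> d \<and> d < b \<and> (\<forall>x. x \<notin> {c..d} \<longrightarrow> \<phi> x = 0))"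
  unfolding test_fun_def smooth_def by simp

lemma test_smooth: "test_fun a b \<phi> \<Longrightarrow> smooth \<phi>"
  using test_fun_alt by blast

lemma zero_outside_deriv:
  fixes f :: "real \<Rightarrow> real"
  assumes "\<forall>x. x \<notin> {c..d} \<longrightarrow> f x = 0" "x \<notin> {c..d}"
  shows "(f has_real_derivative 0) (at x)"
proof -
  have "((\<lambda>_. 0) has_real_derivative 0) (at x)" by simp
  then show ?thesis
    apply (rule has_field_derivative_transform_within_open[where S="- {c..d}"])
    using assms by auto
qed

lemma zero_outside_deriv':
  fixes f :: "real \<Rightarrow> real"
  assumes "\<forall>x. x \<notin> {c..d} \<longrightarrow> f x = 0"
  shows "\<forall>x. x \<notin> {c..d} \<longrightarrow> deriv f x = 0"
  using zero_outside_deriv[OF assms] DERIV_imp_deriv by blast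

lemma test_deriv: "test_fun a b \<phi> \<Longrightarrow> test_fun a b (deriv \<phi>)"
  unfolding test_fun_alt using smooth_deriv zero_outside_deriv' by meson

lemma test_lin:
  assumes "test_fun a b \<theta>" "test_fun a b \<eta>"
  shows "test_fun a b (\<lambda>x. \<theta> x - k * \<eta> x)"
proof -
  obtain c d where cd: "a < c" "c \<le> d" "d < b" "\<forall>x. x \<notin> {c..d} \<longrightarrow> \<theta> x = 0"
    using assms(1) test_fun_alt by blast
  obtain c' d' where cd': "a < c'" "c' \<le> d'" "d' < b" "\<forall>x. x \<notin> {c'..d'} \<longrightarrow> \<eta> x = 0"
    using assms(2) test_fun_alt by blast
  have "smooth (\<lambda>x. \<theta> x - k * \<eta> x)"
    using assms test_smooth smooth_diff_fun smooth_cmult by blast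
  moreover have "\<forall>x. x \<notin> {min c c'..max d d'} \<longrightarrow> \<theta> x - k * \<eta> x = 0"
  proof (intro allI impI)
    fix x assume "x \<notin> {min c c'..max d d'}"
    then have "x \<notin> {c..d}" "x \<notin> {c'..d'}" by auto
    then show "\<theta> x - k * \<eta> x = 0" using cd(4) cd'(4) by simp
  qed
  ultimately show ?thesis unfolding test_fun_alt
    using cd cd' by (intro conjI exI[of _ "min c c'"] exI[of _ "max d d'"]) auto
qed

lemma smooth_bump_at: "smooth (\<lambda>x. bump ((1/r) * x + (- y / r)))"
  by (rule smooth_affine[OF smooth_bump])

lemma bump_at_zero:
  assumes "r > 0" "x \<notin> {y - r..y + r}"
  shows "bump ((1/r) * x + (- y / r)) = 0"
proof -
  have "\<bar>x - y\<bar> \<ge> r" using assms by auto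
  then have "\<bar>(1/r) * x + (- y / r)\<bar> \<ge> 1"
    using assms(1) by (simp add: field_simps abs_div_pos[symmetric] diff_divide_distrib[symmetric])
  then show ?thesis by (rule bump_zero)
qed

lemma test_bump:
  assumes "r > 0" "a < y - r" "y + r < b"
  shows "test_fun a b (\<lambda>x. bump ((1/r) * x + (- y / r)))"
  unfolding test_fun_alt using smooth_bump_at bump_at_zero[OF assms(1)] assms
  by (intro conjI exI[of _ "y-r"] exI[of _ "y+r"]) auto

lemma integral_support:
  fixes f :: "real \<Rightarrow> real"
  assumes "continuous_on {c..d} f" "\<forall>x. x \<notin> {c..d} \<longrightarrow> f x = 0" "{c..d} \<subseteq> {u..v}"
  shows "integral {u..v} f = integral {c..d} f"
proof -
  have "(f has_integral integral {c..d} f) {c..d}"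
    using integrable_continuous_real[OF assms(1)] by (simp add: integrable_integral)
  then have "(f has_integral integral {c..d} f) {u..v}"
    by (rule has_integral_on_superset) (use assms in auto)
  then show ?thesis by (rule integral_unique)
qed

lemma cont_int:
  fixes f :: "real \<Rightarrow> real"
  shows "continuous_on {a..b} f \<Longrightarrow> f integrable_on {a..b}"
  by (rule integrable_continuous_real)

lemma dbr0_pos:
  fixes H :: "real \<Rightarrow> real"
  assumes ab: "a < b" and cH: "continuous_on {a..b} H"
    and hyp: "\<forall>\<theta>. test_fun a b \<theta> \<longrightarrow> integral {a..b} (\<lambda>x. H x * \<theta> x) = 0"
    and y: "a < y" "y < b" and pos: "H y > 0"
  shows False
proof -
  obtain \<delta> where \<delta>: "\<delta> > 0" "\<forall>x\<in>{a..b}. dist x y < \<delta> \<longrightarrow> dist (H x) (H y) < H y / 2"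
    using cH y pos unfolding continuous_on_iff
    by (metis atLeastAtMost_iff half_gt_zero less_eq_real_def)
  define r where "r = min \<delta> (min (y - a) (b - y)) / 2"
  have "2*r \<le> \<delta>" "2*r \<le> (y-a)" "2*r \<le> (b-y)" "r > 0" using \<delta> assms(4,5) unfolding r_def by (auto simp: min_def)
  then have r: "r > 0" "r < \<delta>" "a < y - r" "y + r < b" using \<delta> assms(4,5) by linarith+
  define \<theta> where "\<theta> = (\<lambda>x. bump ((1/r) * x + (- y / r)))"
  have t: "test_fun a b \<theta>" unfolding \<theta>_def by (rule test_bump[OF r(1) r(3) r(4)])
  have z: "\<forall>x. x \<notin> {y - r..y + r} \<longrightarrow> \<theta> x = 0"
    unfolding \<theta>_def using bump_at_zero[OF r(1)] by blast
  have c\<theta>: "continuous_on {a..b} \<theta>" using t test_smooth smooth_cont by blast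
  have cf: "continuous_on {a..b} (\<lambda>x. H x * \<theta> x)" using cH c\<theta> by (intro continuous_intros)
  have nn: "0 \<le> H x * \<theta> x" if "x \<in> {a..b}" for x
  proof (cases "x \<in> {y - r..y + r}")
    case True
    then have "dist x y < \<delta>" using r by (auto simp: dist_real_def)
    then have "dist (H x) (H y) < H y / 2" using \<delta>(2) that by blast
    then have "H x > 0" by (simp add: dist_real_def abs_if split: if_splits)
    then show ?thesis unfolding \<theta>_def using bump_nonneg by simp
  next
    case False then show ?thesis using z by simp
  qed
  have "((\<lambda>x. H x * \<theta> x) has_integral 0) (cbox a b)"
    using hyp t cont_int[OF cf] by (metis box_real(2) integrable_integral)
  then have "H y * \<theta> y = 0"
    using has_integral_0_cbox_imp_0[of a b "\<lambda>x. H x * \<theta> x" y] cf nn ab y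
    by (auto simp: box_real)
  moreover have "\<theta> y > 0" unfolding \<theta>_def using r(1) by (intro bump_pos) (simp add: field_simps)
  ultimately show False using pos by simp
qed

lemma dbr0:
  fixes H :: "real \<Rightarrow> real"
  assumes ab: "a < b" and cH: "continuous_on {a..b} H"
    and hyp: "\<forall>\<theta>. test_fun a b \<theta> \<longrightarrow> integral {a..b} (\<lambda>x. H x * \<theta> x) = 0"
    and y: "a < y" "y < b"
  shows "H y = 0"
proof (rule ccontr)
  assume "H y \<noteq> 0"
  then consider "H y > 0" | "(\<lambda>x. - H x) y > 0" by linarith
  then show False
  proof cases
    case 1 then show False using dbr0_pos[OF ab cH hyp y] by blast
  next
    case 2
    have "continuous_on {a..b} (\<lambda>x. - H x)" using cH by (intro continuous_intros)
    moreover have "\<forall>\<theta>. test_fun a b \<theta> \<longrightarrow> integral {a..b} (\<lambda>x. - H x * \<theta> x) = 0"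
      using hyp by simp
    ultimately show False using dbr0_pos[of a b "\<lambda>x. - H x" y] ab y 2 by blast
  qed
qed

lemma norm_test:
  fixes a b :: real
  assumes "a < b"
  shows "\<exists>\<theta>. test_fun a b \<theta> \<and> integral {a..b} \<theta> = 1"
proof -
  define y where "y = (a + b) / 2"
  define r where "r = (b - a) / 4"
  have r: "r > 0" "a < y - r" "y + r < b" using assms unfolding y_def r_def by (auto simp: field_simps)
  define \<theta> where "\<theta> = (\<lambda>x. bump ((1/r) * x + (- y / r)))"
  have t: "test_fun a b \<theta>" unfolding \<theta>_def by (rule test_bump[OF r])
  have c\<theta>: "continuous_on {a..b} \<theta>" using t test_smooth smooth_cont by blast
  define I where "I = integral {a..b} \<theta>"
  have "I \<ge> 0" unfolding I_def \<theta>_def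
    by (rule integral_nonneg) (use cont_int[OF c\<theta>] bump_nonneg in \<open>auto simp: \<theta>_def\<close>)
  moreover have "I \<noteq> 0"
  proof
    assume "I = 0"
    then have "(\<theta> has_integral 0) (cbox a b)"
      using cont_int[OF c\<theta>] unfolding I_def by (metis box_real(2) integrable_integral)
    then have "\<theta> y = 0"
      using has_integral_0_cbox_imp_0[of a b \<theta> y] c\<theta> assms r bump_nonneg
      by (auto simp: box_real \<theta>_def)
    moreover have "\<theta> y > 0" unfolding \<theta>_def using r(1) by (intro bump_pos) (simp add: field_simps)
    ultimately show False by simp
  qed
  ultimately have I: "I > 0" by simp
  have "test_fun a b (\<lambda>x. \<theta> x - (1 - 1 / I) * \<theta> x)" by (rule test_lin[OF t t])
  moreover have "(\<lambda>x. \<theta> x - (1 - 1 / I) * \<theta> x) = (\<lambda>x. (1/I) * \<theta> x)"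
    by (auto simp: algebra_simps)
  moreover have "integral {a..b} (\<lambda>x. (1/I) * \<theta> x) = 1"
    using I unfolding I_def by simp
  ultimately show ?thesis by metis
qed

lemma anti:
  fixes a b :: real
  assumes t: "test_fun a b \<zeta>" and z: "integral {a..b} \<zeta> = 0"
  shows "\<exists>\<phi>. test_fun a b \<phi> \<and> (\<forall>x. (\<phi> has_real_derivative \<zeta> x) (at x))"
proof -
  obtain c d where cd: "a < c" "c \<le> d" "d < b" "\<forall>x. x \<notin> {c..d} \<longrightarrow> \<zeta> x = 0"
    using t test_fun_alt by blast
  have sm: "smooth \<zeta>" using t test_smooth by blast
  have cz: "continuous_on S \<zeta>" for S using sm smooth_cont by blast
  define \<phi> where "\<phi> = (\<lambda>x. integral {a..x} \<zeta>)"
  have left: "\<phi> x = 0" if "x < c" for x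
  proof -
    have "integral {a..x} \<zeta> = integral {a..x} (\<lambda>_. 0)"
      by (rule integral_cong) (use that cd in auto)
    then show ?thesis unfolding \<phi>_def by simp
  qed
  have right: "\<phi> x = 0" if "x > d" for x
  proof -
    have "integral {a..x} \<zeta> = integral {c..d} \<zeta>"
      by (rule integral_support[OF cz cd(4)]) (use that cd in auto)
    also have "\<dots> = integral {a..b} \<zeta>"
      by (rule integral_support[OF cz cd(4), symmetric]) (use cd in auto)
    finally show ?thesis using z unfolding \<phi>_def by simp
  qed
  have der: "(\<phi> has_real_derivative \<zeta> x) (at x)" for x
  proof (cases "x > a")
    case True
    have "(\<phi> has_real_derivative \<zeta> x) (at x within {a..x+1})"
      unfolding \<phi>_def by (rule integral_has_real_derivative[OF cz]) (use True in auto)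
    then show ?thesis using True at_within_Icc_at[of a x "x+1"] by auto
  next
    case False
    then have "x < c" using cd by auto
    have "((\<lambda>_. 0) has_real_derivative 0) (at x)" by simp
    then have "(\<phi> has_real_derivative 0) (at x)"
      by (rule has_field_derivative_transform_within_open[where S="{..<c}"])
         (use \<open>x < c\<close> left in auto)
    moreover have "\<zeta> x = 0" using cd \<open>x < c\<close> by auto
    ultimately show ?thesis by simp
  qed
  have "smooth \<phi>" by (rule smooth_from_deriv[OF der sm])
  moreover have "\<forall>x. x \<notin> {c..d} \<longrightarrow> \<phi> x = 0" using left right by auto
  ultimately have "test_fun a b \<phi>" unfolding test_fun_alt using cd by blast
  then show ?thesis using der by blast
qed

lemma test_cont: "test_fun a b \<phi> \<Longrightarrow> continuous_on S \<phi>"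
  using test_smooth smooth_cont by blast

lemma test_deriv_eq: "test_fun a b \<phi> \<Longrightarrow> (\<forall>x. (\<phi> has_real_derivative \<zeta> x) (at x)) \<Longrightarrow> deriv \<phi> = \<zeta>"
  using DERIV_imp_deriv by blast

lemma int_diff_c:
  fixes f g :: "real \<Rightarrow> real"
  shows "continuous_on {a..b} f \<Longrightarrow> continuous_on {a..b} g \<Longrightarrow>
    integral {a..b} (\<lambda>x. f x - g x) = integral {a..b} f - integral {a..b} g"
  by (intro integral_diff cont_int)

lemma int_add_c:
  fixes f g :: "real \<Rightarrow> real"
  shows "continuous_on {a..b} f \<Longrightarrow> continuous_on {a..b} g \<Longrightarrow>
    integral {a..b} (\<lambda>x. f x + g x) = integral {a..b} f + integral {a..b} g"
  by (intro integral_add cont_int)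

lemma int_cmul: "integral S (\<lambda>x. c * f x) = c * integral S (f :: real \<Rightarrow> real)"
  using integral_cmul[of S c f] by simp

lemma dbr1:
  fixes H :: "real \<Rightarrow> real"
  assumes ab: "a < b" and cH: "continuous_on {a..b} H"
    and hyp: "\<forall>\<omega>. test_fun a b \<omega> \<longrightarrow> integral {a..b} (\<lambda>x. H x * deriv \<omega> x) = 0"
  shows "\<exists>k. \<forall>y\<in>{a<..<b}. H y = k"
proof -
  obtain \<theta>0 where t0: "test_fun a b \<theta>0" and i0: "integral {a..b} \<theta>0 = 1"
    using norm_test[OF ab] by blast
  have c\<theta>0: "continuous_on {a..b} \<theta>0" using t0 test_cont by blast
  define k where "k = integral {a..b} (\<lambda>x. H x * \<theta>0 x)"
  have main: "integral {a..b} (\<lambda>x. (H x - k) * \<theta> x) = 0" if t: "test_fun a b \<theta>" for \<theta>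
  proof -
    define m where "m = integral {a..b} \<theta>"
    define \<zeta> where "\<zeta> = (\<lambda>x. \<theta> x - m * \<theta>0 x)"
    have tz: "test_fun a b \<zeta>" unfolding \<zeta>_def by (rule test_lin[OF t t0])
    have c\<theta>: "continuous_on {a..b} \<theta>" using t test_cont by blast
    have "integral {a..b} \<zeta> = integral {a..b} \<theta> - integral {a..b} (\<lambda>x. m * \<theta>0 x)"
      unfolding \<zeta>_def by (rule int_diff_c[OF c\<theta> continuous_on_mult_left[OF c\<theta>0]])
    then have "integral {a..b} \<zeta> = 0" by (simp add: int_cmul i0 m_def)
    then obtain \<omega> where tc: "test_fun a b \<omega>" and d: "\<forall>x. (\<omega> has_real_derivative \<zeta> x) (at x)"
      using anti[OF tz] by blast
    have "deriv \<omega> = \<zeta>" using test_deriv_eq[OF tc d] .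
    then have h0: "integral {a..b} (\<lambda>x. H x * \<zeta> x) = 0" using hyp tc by metis
    have "integral {a..b} (\<lambda>x. H x * \<zeta> x) = integral {a..b} (\<lambda>x. H x * \<theta> x - m * (H x * \<theta>0 x))"
      unfolding \<zeta>_def by (simp add: algebra_simps)
    also have "\<dots> = integral {a..b} (\<lambda>x. H x * \<theta> x) - m * k"
      by (subst int_diff_c) (auto simp: int_cmul k_def intro!: continuous_on_mult cH c\<theta> c\<theta>0 continuous_on_mult_left)
    finally have h1: "integral {a..b} (\<lambda>x. H x * \<zeta> x) = integral {a..b} (\<lambda>x. H x * \<theta> x) - m * k" .
    have "integral {a..b} (\<lambda>x. (H x - k) * \<theta> x) = integral {a..b} (\<lambda>x. H x * \<theta> x - k * \<theta> x)"
      by (simp add: algebra_simps)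
    also have "\<dots> = integral {a..b} (\<lambda>x. H x * \<theta> x) - k * m"
      by (subst int_diff_c) (auto simp: int_cmul m_def intro!: continuous_on_mult cH c\<theta> continuous_on_mult_left)
    finally show ?thesis using h0 h1 by simp
  qed
  have cHk: "continuous_on {a..b} (\<lambda>x. H x - k)" using cH by (intro continuous_on_diff continuous_on_const)
  have "H y - k = 0" if "y \<in> {a<..<b}" for y
    using dbr0[OF ab cHk _, of y] main that by auto
  then show ?thesis by auto
qed

lemma FTC_real:
  fixes f f' :: "real \<Rightarrow> real"
  assumes "a \<le> b" "\<And>x. x \<in> {a..b} \<Longrightarrow> (f has_real_derivative f' x) (at x)"
  shows "(f' has_integral (f b - f a)) {a..b}"
  apply (rule fundamental_theorem_of_calculus[OF assms(1)])
  using assms(2) has_field_derivative_at_within has_real_derivative_iff_has_vector_derivative by blast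

lemma parts_x:
  assumes t: "test_fun a b \<omega>" and ab: "a < b"
  shows "integral {a..b} (\<lambda>x. x * deriv \<omega> x) = - integral {a..b} \<omega>"
proof -
  obtain c d where cd: "a < c" "c \<le> d" "d < b" "\<forall>x. x \<notin> {c..d} \<longrightarrow> \<omega> x = 0"
    using t test_fun_alt by blast
  have sm: "smooth \<omega>" using t test_smooth by blast
  have d: "((\<lambda>x. x * \<omega> x) has_real_derivative (\<omega> x + x * deriv \<omega> x)) (at x)" for x
  proof -
    have "((\<lambda>x. x * \<omega> x) has_real_derivative (1 * \<omega> x + deriv \<omega> x * x)) (at x)"
      by (rule DERIV_mult[OF DERIV_ident smooth_DERIV[OF sm]])
    moreover have "1 * \<omega> x + deriv \<omega> x * x = \<omega> x + x * deriv \<omega> x" by (simp add: mult.commute)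
    ultimately show ?thesis by metis
  qed
  have "((\<lambda>x. \<omega> x + x * deriv \<omega> x) has_integral (b * \<omega> b - a * \<omega> a)) {a..b}"
    by (rule FTC_real[where f="\<lambda>x. x * \<omega> x"]) (use ab d in auto)
  moreover have "\<omega> a = 0" "\<omega> b = 0" using cd by auto
  ultimately have "((\<lambda>x. \<omega> x + x * deriv \<omega> x) has_integral 0) {a..b}" by simp
  then have "integral {a..b} (\<lambda>x. \<omega> x + x * deriv \<omega> x) = 0" by (rule integral_unique)
  moreover have "integral {a..b} (\<lambda>x. \<omega> x + x * deriv \<omega> x) = integral {a..b} \<omega> + integral {a..b} (\<lambda>x. x * deriv \<omega> x)"
    by (rule int_add_c[OF smooth_cont[OF sm] continuous_on_mult[OF continuous_on_id smooth_cont[OF smooth_deriv[OF sm]]]])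
  ultimately show ?thesis by simp
qed

lemma dbr2:
  fixes H :: "real \<Rightarrow> real"
  assumes ab: "a < b" and cH: "continuous_on {a..b} H"
    and hyp: "\<forall>\<phi>. test_fun a b \<phi> \<longrightarrow> integral {a..b} (\<lambda>x. H x * deriv (deriv \<phi>) x) = 0"
  shows "\<exists>\<alpha> \<beta>. \<forall>y\<in>{a<..<b}. H y = \<alpha> + \<beta> * y"
proof -
  obtain \<theta>0 where t0: "test_fun a b \<theta>0" and i0: "integral {a..b} \<theta>0 = 1"
    using norm_test[OF ab] by blast
  have s0: "smooth \<theta>0" using t0 test_smooth by blast
  have c\<theta>0: "continuous_on {a..b} \<theta>0" using t0 test_cont by blast
  have cd\<theta>0: "continuous_on {a..b} (deriv \<theta>0)" using smooth_cont[OF smooth_deriv[OF s0]] .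
  define dd where "dd = integral {a..b} (\<lambda>x. H x * deriv \<theta>0 x)"
  have main: "integral {a..b} (\<lambda>x. (H x + dd * x) * deriv \<omega> x) = 0" if t: "test_fun a b \<omega>" for \<omega>
  proof -
    define m where "m = integral {a..b} \<omega>"
    define \<zeta> where "\<zeta> = (\<lambda>x. \<omega> x - m * \<theta>0 x)"
    have sw: "smooth \<omega>" using t test_smooth by blast
    have tz: "test_fun a b \<zeta>" unfolding \<zeta>_def by (rule test_lin[OF t t0])
    have c\<omega>: "continuous_on {a..b} \<omega>" using t test_cont by blast
    have cd\<omega>: "continuous_on {a..b} (deriv \<omega>)" using smooth_cont[OF smooth_deriv[OF sw]] .
    have "integral {a..b} \<zeta> = integral {a..b} \<omega> - integral {a..b} (\<lambda>x. m * \<theta>0 x)"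
      unfolding \<zeta>_def by (rule int_diff_c[OF c\<omega> continuous_on_mult_left[OF c\<theta>0]])
    then have "integral {a..b} \<zeta> = 0" by (simp add: int_cmul i0 m_def)
    then obtain \<phi> where tp: "test_fun a b \<phi>" and d: "\<forall>x. (\<phi> has_real_derivative \<zeta> x) (at x)"
      using anti[OF tz] by blast
    have "deriv \<phi> = \<zeta>" using test_deriv_eq[OF tp d] .
    moreover have "deriv \<zeta> = (\<lambda>x. deriv \<omega> x - m * deriv \<theta>0 x)"
    proof
      fix x
      have "(\<zeta> has_real_derivative deriv \<omega> x - m * deriv \<theta>0 x) (at x)"
        unfolding \<zeta>_def by (intro DERIV_diff DERIV_cmult smooth_DERIV sw s0)
      then show "deriv \<zeta> x = deriv \<omega> x - m * deriv \<theta>0 x" by (rule DERIV_imp_deriv)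
    qed
    ultimately have "integral {a..b} (\<lambda>x. H x * (deriv \<omega> x - m * deriv \<theta>0 x)) = 0"
      using hyp tp by metis
    moreover have "integral {a..b} (\<lambda>x. H x * (deriv \<omega> x - m * deriv \<theta>0 x))
        = integral {a..b} (\<lambda>x. H x * deriv \<omega> x - m * (H x * deriv \<theta>0 x))"
      by (simp add: algebra_simps)
    moreover have "\<dots> = integral {a..b} (\<lambda>x. H x * deriv \<omega> x) - m * dd"
      by (subst int_diff_c) (auto simp: int_cmul dd_def intro!: continuous_on_mult cH cd\<omega> cd\<theta>0 continuous_on_mult_left)
    ultimately have h1: "integral {a..b} (\<lambda>x. H x * deriv \<omega> x) = m * dd" by simp
    have "integral {a..b} (\<lambda>x. (H x + dd * x) * deriv \<omega> x)
        = integral {a..b} (\<lambda>x. H x * deriv \<omega> x + dd * (x * deriv \<omega> x))"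
      by (simp add: algebra_simps)
    also have "\<dots> = integral {a..b} (\<lambda>x. H x * deriv \<omega> x) + dd * integral {a..b} (\<lambda>x. x * deriv \<omega> x)"
      by (subst int_add_c) (auto simp: int_cmul intro!: continuous_on_mult cH cd\<omega> continuous_on_mult_left continuous_on_id)
    also have "\<dots> = m * dd + dd * (- m)" using h1 parts_x[OF t ab] m_def by simp
    finally show ?thesis by simp
  qed
  have cHd: "continuous_on {a..b} (\<lambda>x. H x + dd * x)"
    using cH by (intro continuous_on_add continuous_on_mult_left continuous_on_id)
  obtain k where k: "\<forall>y\<in>{a<..<b}. H y + dd * y = k"
    using dbr1[OF ab cHd] main by blast
  then have "\<forall>y\<in>{a<..<b}. H y = k + (- dd) * y" by (metis add_diff_cancel_right' minus_mult_left uminus_add_conv_diff add.commute)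
  then show ?thesis by blast
qed

lemma abs_powr_deriv:
  fixes r y :: real
  assumes r: "r > 1"
  shows "((\<lambda>y. \<bar>y\<bar> powr r) has_real_derivative r * sgn y * \<bar>y\<bar> powr (r - 1)) (at y)"
proof -
  consider "y > 0" | "y < 0" | "y = 0" by linarith
  then show ?thesis
  proof cases
    case 1
    have "((\<lambda>z. z powr r) has_real_derivative r * y powr (r - 1)) (at y)"
      using has_real_derivative_powr[OF 1] .
    moreover have "r * y powr (r - 1) = r * sgn y * \<bar>y\<bar> powr (r - 1)" using 1 by simp
    ultimately have d: "((\<lambda>z. z powr r) has_real_derivative r * sgn y * \<bar>y\<bar> powr (r - 1)) (at y)" by simp
    then show ?thesis
      by (rule has_field_derivative_transform_within_open[where S="{0<..}"]) (use 1 in auto)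
  next
    case 2
    have d: "((\<lambda>z. (-z) powr r) has_real_derivative r * (-y) powr (r - 1) * (-1)) (at y)"
      by (rule DERIV_chain2[where f="\<lambda>z. z powr r" and g="\<lambda>z. -z", OF has_real_derivative_powr])
         (use 2 in \<open>auto intro!: derivative_eq_intros\<close>)
    have e: "r * (-y) powr (r - 1) * (-1) = r * sgn y * \<bar>y\<bar> powr (r - 1)" using 2 by simp
    show ?thesis
      by (rule has_field_derivative_transform_within_open[OF d[unfolded e], where S="{..<0}"]) (use 2 in auto)
  next
    case 3
    have lim: "((\<lambda>h. \<bar>h\<bar> powr (r - 1)) \<longlongrightarrow> 0) (at 0)"
    proof -
      have "((\<lambda>h. \<bar>h\<bar> powr (r - 1)) \<longlongrightarrow> \<bar>0\<bar> powr (r - 1)) (at (0::real))"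
        using r by (intro tendsto_intros) auto
      then show ?thesis by simp
    qed
    have "((\<lambda>h. (\<bar>h\<bar> powr r - \<bar>0\<bar> powr r) / (h - 0)) \<longlongrightarrow> 0) (at 0)"
    proof (rule Lim_null_comparison[OF _ lim])
      show "\<forall>\<^sub>F h in at 0. norm ((\<bar>h\<bar> powr r - \<bar>0\<bar> powr r) / (h - 0)) \<le> \<bar>h\<bar> powr (r - 1)"
      proof (rule always_eventually, intro allI)
        fix h :: real
        show "norm ((\<bar>h\<bar> powr r - \<bar>0\<bar> powr r) / (h - 0)) \<le> \<bar>h\<bar> powr (r - 1)"
        proof (cases "h = 0")
          case True then show ?thesis by simp
        next
          case False
          then have "\<bar>h\<bar> powr r = \<bar>h\<bar> powr (r - 1) * \<bar>h\<bar>"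
            by (simp add: powr_diff)
          then show ?thesis using False by (simp add: abs_divide)
        qed
      qed
    qed
    then show ?thesis using 3 r by (simp add: has_field_derivative_iff)
  qed
qed

lemma spow_cont:
  fixes p :: real
  assumes p: "p > 1"
  shows "continuous_on UNIV (\<lambda>t::real. \<bar>t\<bar> powr (p - 2) * t)"
  unfolding continuous_on_eq_continuous_at[OF open_UNIV]
proof (intro ballI)
  fix t :: real assume "t \<in> UNIV"
  show "isCont (\<lambda>t::real. \<bar>t\<bar> powr (p - 2) * t) t"
  proof (cases "t = 0")
    case False
    then show ?thesis by (intro continuous_intros) auto
  next
    case True
    have lim: "((\<lambda>h. \<bar>h\<bar> powr (p - 1)) \<longlongrightarrow> 0) (at (0::real))"
    proof -
      have "((\<lambda>h. \<bar>h\<bar> powr (p - 1)) \<longlongrightarrow> \<bar>0\<bar> powr (p - 1)) (at (0::real))"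
        using p by (intro tendsto_intros) auto
      then show ?thesis by simp
    qed
    have "((\<lambda>h. \<bar>h\<bar> powr (p - 2) * h) \<longlongrightarrow> 0) (at (0::real))"
    proof (rule Lim_null_comparison[OF _ lim])
      show "\<forall>\<^sub>F h in at 0. norm (\<bar>h\<bar> powr (p - 2) * h) \<le> \<bar>h\<bar> powr (p - 1)"
      proof (rule always_eventually, intro allI)
        fix h :: real
        show "norm (\<bar>h\<bar> powr (p - 2) * h) \<le> \<bar>h\<bar> powr (p - 1)"
        proof (cases "h = 0")
          case True then show ?thesis by simp
        next
          case False
          have "\<bar>h\<bar> powr (p - 1) = \<bar>h\<bar> powr (p - 2) * \<bar>h\<bar> powr 1"
            by (subst powr_add[symmetric]) simp
          then show ?thesis using False by (simp add: abs_mult)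
        qed
      qed
    qed
    then show ?thesis using True by (simp add: isCont_def)
  qed
qed

lemma spow_sq: "\<bar>t\<bar> powr (p - 2) * t * t = \<bar>t::real\<bar> powr p"
proof (cases "t = 0")
  case True then show ?thesis by simp
next
  case False
  have "\<bar>t\<bar> powr p = \<bar>t\<bar> powr (p - 2) * \<bar>t\<bar> powr 2"
    by (subst powr_add[symmetric]) simp
  also have "\<bar>t\<bar> powr 2 = t * t" using False by (simp add: powr_numeral power2_eq_square)
  finally show ?thesis by simp
qed

lemma spow_abs: "\<bar>\<bar>t\<bar> powr (p - 2) * t\<bar> = \<bar>t::real\<bar> powr (p - 1)"
proof (cases "t = 0")
  case True then show ?thesis by simp
next
  case False
  have "\<bar>t\<bar> powr (p - 1) = \<bar>t\<bar> powr (p - 2) * \<bar>t\<bar> powr 1"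
    by (subst powr_add[symmetric]) simp
  then show ?thesis using False by (simp add: abs_mult)
qed

lemma spow_sgn: "p > 0 \<Longrightarrow> sgn (p * (\<bar>t\<bar> powr (p - 2) * t)) = sgn (t::real)"
  by (cases "t = 0") (auto simp: sgn_mult)

lemma FTC_within:
  fixes f f' :: "real \<Rightarrow> real"
  assumes "a \<le> b" "\<And>x. x \<in> {a..b} \<Longrightarrow> (f has_real_derivative f' x) (at x within {a..b})"
  shows "(f' has_integral (f b - f a)) {a..b}"
  apply (rule fundamental_theorem_of_calculus[OF assms(1)])
  using assms(2) has_real_derivative_iff_has_vector_derivative by blast

lemma alg_At:
  fixes ww W v u2v k F Pk p \<beta> :: real
  assumes "ww > 0" "ww * ww = W" "u2v = k * W * ww" "Pk = F * k"
  shows "((1 - 3*p) * (Pk * v) / ww + \<beta>) * W + 2 * v * u2v * (p * F / W)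
       = (\<beta> * ww + (1 - p) * (Pk * v)) * ww"
proof -
  have W: "W > 0" using assms(1,2) by (metis mult_pos_pos)
  have "(1 - 3*p) * (Pk * v) / ww * W = (1 - 3*p) * (Pk * v) * ww"
    using assms(1,2) by (simp add: field_simps)
  moreover have "2 * v * u2v * (p * F / W) = 2 * p * Pk * v * ww"
    using W assms(3,4) by (simp add: field_simps)
  ultimately show ?thesis using assms(2) by (simp add: algebra_simps)
qed

lemma alg_D:
  fixes ww v u2v k Pk p \<beta> :: real
  assumes "ww > 0" "ww * ww = 1 + v^2" "u2v = k * (1 + v^2) * ww" "p \<noteq> 1"
  shows "\<beta> * (v * u2v / ww) + (1 - p) * (k / (p - 1) * ((\<beta> * ww + (1 - p) * (Pk * v)) * ww) * v + u2v * Pk)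
       = (1 - p) * k * ww * Pk"
proof -
  have p: "p - 1 \<noteq> 0" using assms(4) by simp
  have e1: "v * u2v / ww = v * k * (1 + v^2)" using assms(1,3) by simp
  have e2: "(1 - p) * (k / (p - 1) * X * v + Y) = - k * X * v + (1 - p) * Y" for X Y
    using p by (simp add: field_simps)
  have e3: "(\<beta> * ww + (1 - p) * (Pk * v)) * ww = \<beta> * (1 + v^2) + (1 - p) * (Pk * v) * ww"
    using assms(2) by (simp add: algebra_simps)
  have "\<beta> * (v * k * (1 + v^2)) + (- k * (\<beta> * (1 + v^2) + (1 - p) * (Pk * v) * ww) * v + (1 - p) * (k * (1 + v^2) * ww * Pk))
       = (1 - p) * k * ww * Pk"
    by algebra
  then show ?thesis
    apply (subst e1) apply (subst e2) apply (subst e3) by (simp only: assms(3))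
qed

theorem lemma6p1:
  fixes p q x1 x2 :: real and u u1 u2 :: "real \<Rightarrow> real"
  assumes "p > 1" and "q > 1" and "sobolev_W3 q u u1 u2"
    and "0 \<le> x1" and "x1 < x2" and "x2 \<le> 1"
    and "\<forall>\<phi>. test_fun x1 x2 \<phi> \<longrightarrow>
           integral {x1..x2}
             (\<lambda>x. p * (\<bar>curv u1 u2 x\<bar> powr (p - 2) * curv u1 u2 x) / (1 + (u1 x)\<^sup>2)
                     * deriv (deriv \<phi>) x
                   + (1 - 3 * p) * (\<bar>curv u1 u2 x\<bar> powr p * u1 x) / sqrt (1 + (u1 x)\<^sup>2)
                     * deriv \<phi> x) = 0"
  shows "\<forall>\<psi>. test_fun (arclen u1 x1) (arclen u1 x2) \<psi> \<longrightarrow>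
           integral {arclen u1 x1..arclen u1 x2}
             (\<lambda>s. p * \<bar>curv_s u1 u2 s\<bar> powr (p - 2) * curv_s u1 u2 s * deriv (deriv \<psi>) s
                   + (p - 1) * \<bar>curv_s u1 u2 s\<bar> powr p * curv_s u1 u2 s * \<psi> s) = 0"
proof -
  have p1: "p > 1" and p0: "p > 0" using assms(1) by auto
  have x12: "x1 < x2" "0 \<le> x1" "x2 \<le> 1" using assms by auto
  have du: "\<forall>x\<in>{0..1}. (u1 has_real_derivative u2 x) (at x within {0..1})"
    using assms(3) unfolding sobolev_W3_def by blast
  have cu1: "continuous_on {0..1} u1"
    using du continuous_on_eq_continuous_within DERIV_continuous by blast
  obtain g where gi: "set_integrable lborel {0..1} g"
    and gu: "\<forall>x\<in>{0..1}. u2 x = u2 0 + (LBINT t=0..x. g t)"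
    using assms(3) unfolding sobolev_W3_def by blast
  have cu2: "continuous_on {0..1} u2"
  proof -
    have gI: "g integrable_on {0..1}" using set_borel_integral_eq_integral(1)[OF gi] .
    have c: "continuous_on {0..1} (\<lambda>x. u2 0 + integral {0..x} g)"
      by (intro continuous_intros indefinite_integral_continuous_1 gI)
    have e: "u2 0 + integral {0..x} g = u2 x" if "x \<in> {0..1}" for x
    proof -
      have "set_integrable lborel {0..x} g"
        by (rule set_integrable_subset[OF gi]) (use that in auto)
      then have "interval_lebesgue_integral lborel (ereal 0) (ereal x) g = integral {0..x} g"
        using that by (intro interval_integral_eq_integral) auto
      then have "(LBINT t=0..x. g t) = integral {0..x} g"
        by (simp only: zero_ereal_def)
      moreover have "u2 x = u2 0 + (LBINT t=0..x. g t)" using gu that by blast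
      ultimately show ?thesis by linarith
    qed
    show ?thesis by (rule continuous_on_eq[OF c e])
  qed
  have du_at: "(u1 has_real_derivative u2 x) (at x)" if "x \<in> {0<..<1}" for x
  proof -
    have "x \<in> {0..1}" using that by auto
    then have "(u1 has_real_derivative u2 x) (at x within {0..1})" using du by blast
    then show ?thesis using at_within_Icc_at[of 0 x 1] that by simp
  qed
  define W2 where "W2 = (\<lambda>x. 1 + (u1 x)\<^sup>2)"
  define w where "w = (\<lambda>x. sqrt (1 + (u1 x)\<^sup>2))"
  define K where "K = curv u1 u2"
  define P where "P = (\<lambda>x. \<bar>K x\<bar> powr p)"
  define F where "F = (\<lambda>x. \<bar>K x\<bar> powr (p - 2) * K x)"
  define A where "A = (\<lambda>x. p * (\<bar>K x\<bar> powr (p - 2) * K x) / (1 + (u1 x)\<^sup>2))"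
  define B where "B = (\<lambda>x. (1 - 3 * p) * (\<bar>K x\<bar> powr p * u1 x) / sqrt (1 + (u1 x)\<^sup>2))"
  have hyp: "\<forall>\<phi>. test_fun x1 x2 \<phi> \<longrightarrow>
      integral {x1..x2} (\<lambda>x. A x * deriv (deriv \<phi>) x + B x * deriv \<phi> x) = 0"
    using assms(7) unfolding A_def B_def K_def by simp
  have pos1: "1 + (u1 x)\<^sup>2 > 0" for x using zero_le_power2[of "u1 x"] by linarith
  have pos1': "1 + (u1 x)\<^sup>2 \<noteq> 0" for x using pos1[of x] by linarith
  have W2pos: "W2 x > 0" for x unfolding W2_def by (simp add: add_pos_nonneg)
  have wpos: "w x > 0" for x unfolding w_def by (simp add: add_pos_nonneg)
  have ww: "w x * w x = W2 x" for x unfolding w_def W2_def by (simp add: add_nonneg_nonneg)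
  have u2K: "u2 x = K x * W2 x * w x" for x
  proof -
    have "W2 x powr (3/2) = W2 x powr 1 * W2 x powr (1/2)"
      by (subst powr_add[symmetric]) simp
    also have "\<dots> = W2 x * w x"
      using W2pos[of x] by (simp add: powr_half_sqrt w_def W2_def)
    finally have "W2 x powr (3/2) = W2 x * w x" .
    then show ?thesis unfolding K_def curv_def
      using W2pos[of x] wpos[of x] by (simp add: W2_def)
  qed
  have FK: "F x * K x = P x" for x unfolding F_def P_def by (rule spow_sq)
  have cW2: "continuous_on {0..1} W2" unfolding W2_def by (intro continuous_intros cu1)
  have cw: "continuous_on {0..1} w" unfolding w_def by (intro continuous_intros cu1)
  have cK: "continuous_on {0..1} K"
    unfolding K_def curv_def
    by (intro continuous_intros cu1 cu2) (auto simp: pos1 pos1')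
  have cF: "continuous_on {0..1} F"
    unfolding F_def using continuous_on_compose2[OF spow_cont[OF p1] cK] by simp
  have cP: "continuous_on {0..1} P"
    unfolding P_def using p0 by (intro continuous_on_powr' continuous_intros cK) auto
  have cA: "continuous_on {0..1} A"
  proof -
    have "continuous_on {0..1} (\<lambda>x. p * F x / (1 + (u1 x)\<^sup>2))"
      by (intro continuous_intros cF cu1) (auto simp: pos1 pos1')
    then show ?thesis unfolding A_def F_def .
  qed
  have cB: "continuous_on {0..1} B"
  proof -
    have "continuous_on {0..1} (\<lambda>x. (1 - 3 * p) * (P x * u1 x) / sqrt (1 + (u1 x)\<^sup>2))"
      by (intro continuous_intros cP cu1) (auto simp: pos1 pos1')
    then show ?thesis unfolding B_def P_def .
  qed
  have sub: "{x1..x2} \<subseteq> {0..1}" using x12 by auto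
  have cA': "continuous_on {x1..x2} A" using continuous_on_subset[OF cA sub] .
  have cB': "continuous_on {x1..x2} B" using continuous_on_subset[OF cB sub] .
  define G where "G = (\<lambda>x. integral {x1..x} B)"
  have dG: "(G has_real_derivative B x) (at x within {x1..x2})" if "x \<in> {x1..x2}" for x
    unfolding G_def by (rule integral_has_real_derivative[OF cB' that])
  have cG: "continuous_on {x1..x2} G"
    unfolding G_def by (rule indefinite_integral_continuous_1[OF cont_int[OF cB']])
  have hyp2: "\<forall>\<phi>. test_fun x1 x2 \<phi> \<longrightarrow> integral {x1..x2} (\<lambda>x. (A x - G x) * deriv (deriv \<phi>) x) = 0"
  proof (intro allI impI)
    fix \<phi> assume t: "test_fun x1 x2 \<phi>"
    obtain c d where cd: "x1 < c" "c \<le> d" "d < x2" "\<forall>x. x \<notin> {c..d} \<longrightarrow> \<phi> x = 0"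
      using t test_fun_alt by blast
    have sm: "smooth \<phi>" using t test_smooth by blast
    have c1: "continuous_on {x1..x2} (deriv \<phi>)" using smooth_cont[OF smooth_deriv[OF sm]] .
    have c2: "continuous_on {x1..x2} (deriv (deriv \<phi>))"
      using smooth_cont[OF smooth_deriv[OF smooth_deriv[OF sm]]] .
    have z1: "deriv \<phi> x1 = 0" "deriv \<phi> x2 = 0"
      using zero_outside_deriv'[OF cd(4)] cd by auto
    have "((\<lambda>x. B x * deriv \<phi> x + deriv (deriv \<phi>) x * G x) has_integral
            (G x2 * deriv \<phi> x2 - G x1 * deriv \<phi> x1)) {x1..x2}"
    proof (rule FTC_within[where f="\<lambda>x. G x * deriv \<phi> x"])
      show "x1 \<le> x2" using x12 by simp
      fix x assume x: "x \<in> {x1..x2}"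
      have "(deriv \<phi> has_real_derivative deriv (deriv \<phi>) x) (at x within {x1..x2})"
        using smooth_DERIV[OF smooth_deriv[OF sm]] has_field_derivative_at_within by blast
      then show "((\<lambda>x. G x * deriv \<phi> x) has_real_derivative
          B x * deriv \<phi> x + deriv (deriv \<phi>) x * G x) (at x within {x1..x2})"
        by (rule DERIV_mult[OF dG[OF x]])
    qed
    then have "((\<lambda>x. B x * deriv \<phi> x + deriv (deriv \<phi>) x * G x) has_integral 0) {x1..x2}"
      using z1 by simp
    then have "integral {x1..x2} (\<lambda>x. B x * deriv \<phi> x + deriv (deriv \<phi>) x * G x) = 0"
      by (rule integral_unique)
    then have e1': "integral {x1..x2} (\<lambda>x. B x * deriv \<phi> x) + integral {x1..x2} (\<lambda>x. deriv (deriv \<phi>) x * G x) = 0"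
      by (subst (asm) int_add_c[OF continuous_on_mult[OF cB' c1] continuous_on_mult[OF c2 cG]])
    have "(\<lambda>x. deriv (deriv \<phi>) x * G x) = (\<lambda>x. G x * deriv (deriv \<phi>) x)" by (simp add: mult.commute)
    then have e1: "integral {x1..x2} (\<lambda>x. B x * deriv \<phi> x) + integral {x1..x2} (\<lambda>x. G x * deriv (deriv \<phi>) x) = 0"
      using e1' by simp
    have "integral {x1..x2} (\<lambda>x. A x * deriv (deriv \<phi>) x + B x * deriv \<phi> x) = 0"
      using hyp t by blast
    then have e2: "integral {x1..x2} (\<lambda>x. A x * deriv (deriv \<phi>) x) + integral {x1..x2} (\<lambda>x. B x * deriv \<phi> x) = 0"
      by (subst (asm) int_add_c[OF continuous_on_mult[OF cA' c2] continuous_on_mult[OF cB' c1]])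
    have "integral {x1..x2} (\<lambda>x. (A x - G x) * deriv (deriv \<phi>) x)
        = integral {x1..x2} (\<lambda>x. A x * deriv (deriv \<phi>) x - G x * deriv (deriv \<phi>) x)"
      by (simp add: algebra_simps)
    also have "\<dots> = integral {x1..x2} (\<lambda>x. A x * deriv (deriv \<phi>) x) - integral {x1..x2} (\<lambda>x. G x * deriv (deriv \<phi>) x)"
      by (rule int_diff_c[OF continuous_on_mult[OF cA' c2] continuous_on_mult[OF cG c2]])
    finally show "integral {x1..x2} (\<lambda>x. (A x - G x) * deriv (deriv \<phi>) x) = 0" using e1 e2 by simp
  qed
  have cAG: "continuous_on {x1..x2} (\<lambda>x. A x - G x)" by (intro continuous_on_diff cA' cG)
  obtain \<alpha> \<beta> where ab: "\<forall>y\<in>{x1<..<x2}. A y - G y = \<alpha> + \<beta> * y"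
    using dbr2[OF x12(1) cAG hyp2] by blast
  have dA: "(A has_real_derivative B x + \<beta>) (at x)" if x: "x \<in> {x1<..<x2}" for x
  proof -
    have "(G has_real_derivative B x) (at x)"
      using dG[of x] x at_within_Icc_at[of x1 x x2] by auto
    then have "((\<lambda>y. G y + (\<alpha> + \<beta> * y)) has_real_derivative B x + (0 + \<beta> * 1)) (at x)"
      by (intro DERIV_add DERIV_cmult DERIV_const DERIV_ident)
    then have d: "((\<lambda>y. G y + (\<alpha> + \<beta> * y)) has_real_derivative B x + \<beta>) (at x)" by simp
    have eqA: "G y + (\<alpha> + \<beta> * y) = A y" if "y \<in> {x1<..<x2}" for y
    proof -
      have "A y - G y = \<alpha> + \<beta> * y" using ab that by blast
      then show ?thesis by linarith
    qed
    show ?thesis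
      by (rule has_field_derivative_transform_within_open[OF d open_greaterThanLessThan x eqA])
  qed
  define s where "s = arclen u1"
  have s_eq: "s x = integral {0..x} w" for x unfolding s_def arclen_def w_def by simp
  have ds: "(s has_real_derivative w x) (at x within {0..1})" if "x \<in> {0..1}" for x
  proof -
    have "((\<lambda>x. integral {0..x} w) has_real_derivative w x) (at x within {0..1})"
      by (rule integral_has_real_derivative[OF cw that])
    moreover have "(\<lambda>x. integral {0..x} w) = s" using s_eq by (intro ext) simp
    ultimately show ?thesis by simp
  qed
  have w1: "w x \<ge> 1" for x unfolding w_def by simp
  have smono: "s x < s y" if "x \<in> {0..1}" "y \<in> {0..1}" "x < y" for x y
  proof -
    have iy: "w integrable_on {0..y}"
      using cont_int[OF continuous_on_subset[OF cw]] that by auto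
    have "integral {0..x} w + integral {x..y} w = integral {0..y} w"
      using Henstock_Kurzweil_Integration.integral_combine[of 0 x y w] that iy by auto
    moreover have "integral {x..y} (\<lambda>_. 1::real) \<le> integral {x..y} w"
      by (rule integral_le) (use that in \<open>auto intro!: cont_int continuous_on_subset[OF cw] w1\<close>)
    moreover have "integral {x..y} (\<lambda>_. 1::real) = y - x" using that by simp
    ultimately show ?thesis using that s_eq by auto
  qed
  have inj: "inj_on s {0..1}"
    by (rule strict_mono_on_imp_inj_on) (auto simp: strict_mono_on_def smono)
  define X where "X = the_inv_into {0..1} s"
  have Xs: "X (s x) = x" if "x \<in> {0..1}" for x
    unfolding X_def by (rule the_inv_into_f_f[OF inj that])
  define S1 where "S1 = s x1"
  define S2 where "S2 = s x2"
  have S12: "S1 < S2" unfolding S1_def S2_def using smono x12 by auto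
  have cs: "continuous_on {x1..x2} s"
  proof -
    have "continuous_on {0..1} s"
      using ds continuous_on_eq_continuous_within DERIV_continuous by blast
    then show ?thesis using continuous_on_subset sub by blast
  qed
  have surj: "\<exists>x\<in>{x1..x2}. s x = \<sigma>" if "\<sigma> \<in> {S1..S2}" for \<sigma>
    using IVT'[of s x1 \<sigma> x2] that cs x12 unfolding S1_def S2_def by auto
  have Xin: "X \<sigma> \<in> {x1<..<x2} \<and> s (X \<sigma>) = \<sigma>" if s12: "\<sigma> \<in> {S1<..<S2}" for \<sigma>
  proof -
    obtain x where x: "x \<in> {x1..x2}" "s x = \<sigma>" using surj[of \<sigma>] s12 by auto
    have x01: "x \<in> {0..1}" using x sub by auto
    have "X \<sigma> = x" using Xs[OF x01] x by simp
    moreover have "x \<noteq> x1" using x s12 unfolding S1_def by auto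
    moreover have "x \<noteq> x2" using x s12 unfolding S2_def by auto
    ultimately show ?thesis using x by auto
  qed
  have cX: "continuous_on {S1..S2} X"
  proof -
    have "continuous_on (s ` {x1..x2}) X"
      by (rule continuous_on_inv[OF cs compact_Icc]) (use Xs sub in auto)
    moreover have "{S1..S2} \<subseteq> s ` {x1..x2}"
    proof
      fix \<sigma> assume "\<sigma> \<in> {S1..S2}"
      then obtain x where "x \<in> {x1..x2}" "s x = \<sigma>" using surj by blast
      then show "\<sigma> \<in> s ` {x1..x2}" by blast
    qed
    ultimately show ?thesis using continuous_on_subset by blast
  qed
  have dX: "(X has_real_derivative inverse (w (X \<sigma>))) (at \<sigma>)" if \<sigma>: "\<sigma> \<in> {S1<..<S2}" for \<sigma>
  proof (rule DERIV_inverse_function[where f=s and a=S1 and b=S2])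
    have xi: "X \<sigma> \<in> {x1<..<x2}" using Xin[OF \<sigma>] by auto
    then have "X \<sigma> \<in> {0..1}" "0 < X \<sigma>" "X \<sigma> < 1" using x12 by auto
    then show "(s has_real_derivative w (X \<sigma>)) (at (X \<sigma>))"
      using ds[of "X \<sigma>"] at_within_Icc_at[of 0 "X \<sigma>" 1] by simp
    show "w (X \<sigma>) \<noteq> 0" using wpos[of "X \<sigma>"] by simp
    show "S1 < \<sigma>" "\<sigma> < S2" using \<sigma> by auto
    show "s (X y) = y" if "S1 < y" "y < S2" for y using Xin[of y] that by auto
    show "isCont X \<sigma>" using continuous_on_interior[OF cX] \<sigma> by simp
  qed
  have p1': "p - 1 > 0" using p1 by simp
  define At where "At = (\<lambda>x. A x * W2 x)"
  define Dx where "Dx = (\<lambda>x. \<beta> * w x + (1 - p) * (P x * u1 x))"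
  have At_eq: "At x = p * F x" for x
    unfolding At_def A_def F_def W2_def using pos1'[of x] by simp
  have dW2: "(W2 has_real_derivative 2 * u1 x * u2 x) (at x)" if "x \<in> {x1<..<x2}" for x
  proof -
    have x01: "x \<in> {0<..<1}" using that x12 by auto
    have "((\<lambda>x. u1 x * u1 x) has_real_derivative u2 x * u1 x + u2 x * u1 x) (at x)"
      by (rule DERIV_mult[OF du_at[OF x01] du_at[OF x01]])
    then have "((\<lambda>x. 1 + u1 x * u1 x) has_real_derivative 0 + (u2 x * u1 x + u2 x * u1 x)) (at x)"
      by (intro DERIV_add DERIV_const)
    moreover have "(\<lambda>x. 1 + u1 x * u1 x) = W2" unfolding W2_def by (simp add: power2_eq_square)
    moreover have "0 + (u2 x * u1 x + u2 x * u1 x) = 2 * u1 x * u2 x" by simp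
    ultimately show ?thesis by metis
  qed
  have dw: "(w has_real_derivative u1 x * u2 x / w x) (at x)" if x: "x \<in> {x1<..<x2}" for x
  proof -
    have sw: "sqrt (W2 y) = w y" for y unfolding w_def W2_def ..
    have "((\<lambda>x. sqrt (W2 x)) has_real_derivative inverse (sqrt (W2 x)) / 2 * (2 * u1 x * u2 x)) (at x)"
      by (rule DERIV_chain2[OF DERIV_real_sqrt[OF W2pos] dW2[OF x]])
    moreover have "(\<lambda>x. sqrt (W2 x)) = w" using sw by (intro ext) simp
    moreover have "inverse (sqrt (W2 x)) / 2 * (2 * u1 x * u2 x) = u1 x * u2 x / w x"
      unfolding sw using wpos[of x] by (simp add: field_simps)
    ultimately show ?thesis by metis
  qed
  have Bw: "B x = (1 - 3 * p) * (P x * u1 x) / w x" for x unfolding B_def P_def w_def ..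
  have AW: "A x = p * F x / W2 x" for x unfolding A_def F_def W2_def ..
  have dAt: "(At has_real_derivative Dx x * w x) (at x)" if x: "x \<in> {x1<..<x2}" for x
  proof -
    have "((\<lambda>x. A x * W2 x) has_real_derivative (B x + \<beta>) * W2 x + 2 * u1 x * u2 x * A x) (at x)"
      by (rule DERIV_mult[OF dA[OF x] dW2[OF x]])
    moreover have "(B x + \<beta>) * W2 x + 2 * u1 x * u2 x * A x = Dx x * w x"
      unfolding Bw AW Dx_def
      by (rule alg_At[OF wpos ww u2K FK[symmetric]])
    ultimately show ?thesis unfolding At_def by simp
  qed
  have Xin1: "X \<sigma> \<in> {x1<..<x2}" if "\<sigma> \<in> {S1<..<S2}" for \<sigma> using Xin[OF that] by simp
  have dAs: "((\<lambda>\<sigma>. At (X \<sigma>)) has_real_derivative Dx (X \<sigma>)) (at \<sigma>)" if \<sigma>: "\<sigma> \<in> {S1<..<S2}" for \<sigma>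
  proof -
    have "((\<lambda>\<sigma>. At (X \<sigma>)) has_real_derivative Dx (X \<sigma>) * w (X \<sigma>) * inverse (w (X \<sigma>))) (at \<sigma>)"
      by (rule DERIV_chain2[OF dAt[OF Xin1[OF \<sigma>]] dX[OF \<sigma>]])
    moreover have "w (X \<sigma>) \<noteq> 0" using wpos[of "X \<sigma>"] by simp
    then have "Dx (X \<sigma>) * w (X \<sigma>) * inverse (w (X \<sigma>)) = Dx (X \<sigma>)" by (simp add: field_simps)
    ultimately show ?thesis by metis
  qed
  define r where "r = p / (p - 1)"
  have r1: "r > 1" unfolding r_def using p1' by (simp add: field_simps)
  define gf where "gf = (\<lambda>y. \<bar>y / p\<bar> powr r)"
  have AtpF: "At x / p = F x" for x using At_eq p0 by simp
  have absF: "\<bar>F x\<bar> = \<bar>K x\<bar> powr (p - 1)" for x unfolding F_def by (rule spow_abs)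
  have P_eq: "P x = gf (At x)" for x
  proof -
    have "gf (At x) = (\<bar>K x\<bar> powr (p - 1)) powr r" unfolding gf_def AtpF absF ..
    also have "\<dots> = \<bar>K x\<bar> powr ((p - 1) * r)" by (rule powr_powr)
    also have "(p - 1) * r = p" unfolding r_def using p1' by simp
    finally show ?thesis unfolding P_def by simp
  qed
  have sgnF: "sgn (F x) = sgn (K x)" for x
    using spow_sgn[OF p0, of "K x"] p0 unfolding F_def by (simp add: sgn_mult)
  have dgf: "(gf has_real_derivative K x / (p - 1)) (at (At x))" for x
  proof -
    have d1: "((\<lambda>y. \<bar>y\<bar> powr r) has_real_derivative r * sgn (At x / p) * \<bar>At x / p\<bar> powr (r - 1)) (at (At x / p))"
      by (rule abs_powr_deriv[OF r1])
    have d2: "((\<lambda>y. y / p) has_real_derivative 1 / p) (at (At x))"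
      using DERIV_cdivide[OF DERIV_ident, of p] by simp
    have "((\<lambda>y. \<bar>y / p\<bar> powr r) has_real_derivative r * sgn (At x / p) * \<bar>At x / p\<bar> powr (r - 1) * (1 / p)) (at (At x))"
      by (rule DERIV_chain2[OF d1 d2])
    moreover have "r * sgn (At x / p) * \<bar>At x / p\<bar> powr (r - 1) * (1 / p) = K x / (p - 1)"
    proof -
      have "\<bar>At x / p\<bar> powr (r - 1) = (\<bar>K x\<bar> powr (p - 1)) powr (r - 1)" unfolding AtpF absF ..
      also have "\<dots> = \<bar>K x\<bar> powr ((p - 1) * (r - 1))" by (rule powr_powr)
      also have "(p - 1) * (r - 1) = 1" unfolding r_def using p1' by (simp add: field_simps)
      finally have e: "\<bar>At x / p\<bar> powr (r - 1) = \<bar>K x\<bar>" by simp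
      then have e': "\<bar>F x\<bar> powr (r - 1) = \<bar>K x\<bar>" unfolding AtpF .
      have "r * sgn (At x / p) * \<bar>At x / p\<bar> powr (r - 1) * (1 / p) = r / p * (sgn (K x) * \<bar>K x\<bar>)"
        unfolding AtpF sgnF e' by simp
      also have "\<dots> = K x / (p - 1)" unfolding r_def using p1' p0 by (simp add: sgn_mult_abs)
      finally show ?thesis .
    qed
    ultimately show ?thesis unfolding gf_def by simp
  qed
  have Pfun: "P = (\<lambda>x. gf (At x))" using P_eq by (intro ext) simp
  have dP: "(P has_real_derivative K x / (p - 1) * (Dx x * w x)) (at x)" if x: "x \<in> {x1<..<x2}" for x
    unfolding Pfun by (rule DERIV_chain2[OF dgf dAt[OF x]])
  have dDx: "(Dx has_real_derivative (1 - p) * K x * w x * P x) (at x)" if x: "x \<in> {x1<..<x2}" for x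
  proof -
    have x01: "x \<in> {0<..<1}" using x x12 by auto
    have "((\<lambda>x. \<beta> * w x + (1 - p) * (P x * u1 x)) has_real_derivative
        \<beta> * (u1 x * u2 x / w x) + (1 - p) * (K x / (p - 1) * (Dx x * w x) * u1 x + u2 x * P x)) (at x)"
      by (intro DERIV_add DERIV_cmult DERIV_mult dw[OF x] dP[OF x] du_at[OF x01])
    moreover have "\<beta> * (u1 x * u2 x / w x) + (1 - p) * (K x / (p - 1) * (Dx x * w x) * u1 x + u2 x * P x)
        = (1 - p) * K x * w x * P x"
    proof -
      have u2': "u2 x = K x * (1 + (u1 x)\<^sup>2) * w x" using u2K[of x] unfolding W2_def .
      have ww': "w x * w x = 1 + (u1 x)\<^sup>2" using ww[of x] unfolding W2_def .
      show ?thesis unfolding Dx_def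
        by (rule alg_D[OF wpos ww' u2']) (use p1 in simp)
    qed
    ultimately show ?thesis unfolding Dx_def by simp
  qed
  have dDs: "((\<lambda>\<sigma>. Dx (X \<sigma>)) has_real_derivative (1 - p) * K (X \<sigma>) * P (X \<sigma>)) (at \<sigma>)"
    if \<sigma>: "\<sigma> \<in> {S1<..<S2}" for \<sigma>
  proof -
    have "((\<lambda>\<sigma>. Dx (X \<sigma>)) has_real_derivative (1 - p) * K (X \<sigma>) * w (X \<sigma>) * P (X \<sigma>) * inverse (w (X \<sigma>))) (at \<sigma>)"
      by (rule DERIV_chain2[OF dDx[OF Xin1[OF \<sigma>]] dX[OF \<sigma>]])
    moreover have "w (X \<sigma>) \<noteq> 0" using wpos[of "X \<sigma>"] by simp
    then have "(1 - p) * K (X \<sigma>) * w (X \<sigma>) * P (X \<sigma>) * inverse (w (X \<sigma>)) = (1 - p) * K (X \<sigma>) * P (X \<sigma>)"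
      by (simp add: field_simps)
    ultimately show ?thesis by metis
  qed
  show ?thesis
  proof (intro allI impI)
    fix \<psi> assume t\<psi>0: "test_fun (arclen u1 x1) (arclen u1 x2) \<psi>"
    then have t\<psi>: "test_fun S1 S2 \<psi>" unfolding S1_def S2_def s_def .
    obtain c d where cd: "S1 < c" "c \<le> d" "d < S2" "\<forall>x. x \<notin> {c..d} \<longrightarrow> \<psi> x = 0"
      using t\<psi> test_fun_alt by blast
    have s\<psi>: "smooth \<psi>" using t\<psi> test_smooth by blast
    define c' where "c' = (S1 + c) / 2"
    define d' where "d' = (d + S2) / 2"
    have c'd': "S1 < c'" "c' < c" "d < d'" "d' < S2" unfolding c'_def d'_def using cd by auto
    have z1: "\<forall>x. x \<notin> {c..d} \<longrightarrow> deriv \<psi> x = 0" by (rule zero_outside_deriv'[OF cd(4)])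
    have z2: "\<forall>x. x \<notin> {c..d} \<longrightarrow> deriv (deriv \<psi>) x = 0" by (rule zero_outside_deriv'[OF z1])
    have Kt: "curv_s u1 u2 \<sigma> = K (X \<sigma>)" for \<sigma> unfolding curv_s_def K_def X_def s_def ..
    define f where "f = (\<lambda>\<sigma>. p * \<bar>curv_s u1 u2 \<sigma>\<bar> powr (p - 2) * curv_s u1 u2 \<sigma> * deriv (deriv \<psi>) \<sigma>
                   + (p - 1) * \<bar>curv_s u1 u2 \<sigma>\<bar> powr p * curv_s u1 u2 \<sigma> * \<psi> \<sigma>)"
    define Fn where "Fn = (\<lambda>\<sigma>. At (X \<sigma>) * deriv \<psi> \<sigma> - Dx (X \<sigma>) * \<psi> \<sigma>)"
    have fd: "(Fn has_real_derivative f \<sigma>) (at \<sigma>)" if "\<sigma> \<in> {c'..d'}" for \<sigma>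
    proof -
      have \<sigma>: "\<sigma> \<in> {S1<..<S2}" using that c'd' cd by auto
      have "(Fn has_real_derivative
         (Dx (X \<sigma>) * deriv \<psi> \<sigma> + deriv (deriv \<psi>) \<sigma> * At (X \<sigma>))
         - ((1 - p) * K (X \<sigma>) * P (X \<sigma>) * \<psi> \<sigma> + deriv \<psi> \<sigma> * Dx (X \<sigma>))) (at \<sigma>)"
        unfolding Fn_def
        by (rule DERIV_diff[OF DERIV_mult[OF dAs[OF \<sigma>] smooth_DERIV[OF smooth_deriv[OF s\<psi>]]]
                               DERIV_mult[OF dDs[OF \<sigma>] smooth_DERIV[OF s\<psi>]]])
      moreover have "(Dx (X \<sigma>) * deriv \<psi> \<sigma> + deriv (deriv \<psi>) \<sigma> * At (X \<sigma>))
         - ((1 - p) * K (X \<sigma>) * P (X \<sigma>) * \<psi> \<sigma> + deriv \<psi> \<sigma> * Dx (X \<sigma>)) = f \<sigma>"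
        unfolding f_def Kt At_eq F_def P_def by (simp add: algebra_simps)
      ultimately show ?thesis by simp
    qed
    have "(f has_integral (Fn d' - Fn c')) {c'..d'}"
      by (rule FTC_real[OF _ fd]) (use c'd' cd in auto)
    moreover have "Fn d' = 0" "Fn c' = 0"
      unfolding Fn_def using cd(4) z1 c'd' by auto
    ultimately have "(f has_integral 0) {c'..d'}" by simp
    then have "(f has_integral 0) {S1..S2}"
    proof (rule has_integral_on_superset)
      show "{c'..d'} \<subseteq> {S1..S2}" using c'd' by auto
      fix x assume "x \<notin> {c'..d'}"
      then have "x \<notin> {c..d}" using c'd' by auto
      then show "f x = 0" unfolding f_def using cd(4) z2 by simp
    qed
    then have "integral {S1..S2} f = 0" by (rule integral_unique)
    then show "integral {arclen u1 x1..arclen u1 x2}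
             (\<lambda>s. p * \<bar>curv_s u1 u2 s\<bar> powr (p - 2) * curv_s u1 u2 s * deriv (deriv \<psi>) s
                   + (p - 1) * \<bar>curv_s u1 u2 s\<bar> powr p * curv_s u1 u2 s * \<psi> s) = 0"
      unfolding f_def S1_def S2_def s_def .
  qed
qed


end
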